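(* Let $I$ be a countable set with $|I|\ge2$, let each $\mathfrak{M}_i=(S_i,\mathcal{L}_i)$, $i\in I$, be a Veblenian gamma space all of whose lines have at least $4$ points, let $\mathfrak{M}=\bigotimes_{i\in I}\mathfrak{M}_i$ with point set $S$, and let $\mathcal{H}$ be a hyperplane of $\mathfrak{M}$. For $X\subseteq S$ the following are equivalent: (i) $X$ is a strong subspace of $\mathfrak{M}\setminus\mathcal{H}$; (ii) $X=a[i/Y_i]\setminus\mathcal{H}$ for some $a\in S$, $i\in I$ and a strong subspace $Y_i$ of $\mathfrak{M}_i$; (iii) $X=a[i/X_i]$ for some $a\in S$, $i\in I$ and a strong subspace $X_i$ of $\mathfrak{M}_i\setminus\mathcal{H}^{[a]}_i$.
   Context: A partial linear space is a pair $(S,\mathcal{L})$ of points and lines such that every line has at least two points, every point lies on a line, two distinct lines share at most one point; points are collinear if on a common line. A subspace is a set such that any line meeting it in at least two points lies in it; it is strong if any two of its points are collinear. A hyperplane is a proper subspace meeting every line. A gamma space is one in which the set of points collinear with any given point is a subspace. It is Veblenian if for any two distinct lines $L_1,L_2$ through a point $p$ and any two distinct lines $K_1,K_2$ not through $p$ such that each $K_j$ meets both $L_1,L_2$, the lines $K_1,K_2$ meet. Segre product: points $S=\prod_i S_i$; $a[i/x]$ is $a$ with $i$-th coordinate replaced by $x$, $a[i/A]=\{a[i/x]:x\in A\}$; lines $a[i/l]$, $l\in\mathcal{L}_i$. $\mathcal{H}^{[a]}_i=\{x\in S_i:a[i/x]\in\mathcal{H}\}$. For a subset $\mathcal{G}$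 of the points of a partial linear space $\mathfrak{N}$ which is a hyperplane or the whole point set, the complement $\mathfrak{N}\setminus\mathcal{G}$ has the points not in $\mathcal{G}$ and the lines $L\setminus\mathcal{G}$ for lines $L\not\subseteq\mathcal{G}$ (and parallelism: lines equivalent iff they meet $\mathcal{G}$ in the same point); subspaces and strong subspaces of a complement are taken with respect to these points and lines. *)

theory Defs
  imports "HOL-Library.FuncSet" "HOL-Library.Countable_Set"
begin

definition partial_linear_space :: "'p set \<Rightarrow> 'p set set \<Rightarrow> bool" where
  "partial_linear_space S L \<longleftrightarrow>
     (\<forall>l\<in>L. l \<subseteq> S \<and> (\<exists>x y. x \<in> l \<and> y \<in> l \<and> x \<noteq> y)) \<and>
     (\<forall>p\<in>S. \<exists>l\<in>L. p \<in> l) \<and>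
     (\<forall>l1\<in>L. \<forall>l2\<in>L. l1 \<noteq> l2 \<longrightarrow> (\<forall>x y. x \<in> l1 \<inter> l2 \<and> y \<in> l1 \<inter> l2 \<longrightarrow> x = y))"

definition collinear :: "'p set set \<Rightarrow> 'p \<Rightarrow> 'p \<Rightarrow> bool" where
  "collinear L p q \<longleftrightarrow> (\<exists>l\<in>L. p \<in> l \<and> q \<in> l)"

definition subspace :: "'p set \<Rightarrow> 'p set set \<Rightarrow> 'p set \<Rightarrow> bool" where
  "subspace S L X \<longleftrightarrow> X \<subseteq> S \<and>
     (\<forall>l\<in>L. (\<exists>x y. x \<in> l \<inter> X \<and> y \<in> l \<inter> X \<and> x \<noteq> y) \<longrightarrow> l \<subseteq> X)"

definition strong_subspace :: "'p set \<Rightarrow> 'p set set \<Rightarrow> 'p set \<Rightarrow> bool" where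
  "strong_subspace S L X \<longleftrightarrow> subspace S L X \<and> (\<forall>x\<in>X. \<forall>y\<in>X. collinear L x y)"

definition hyperplane :: "'p set \<Rightarrow> 'p set set \<Rightarrow> 'p set \<Rightarrow> bool" where
  "hyperplane S L H \<longleftrightarrow> subspace S L H \<and> H \<noteq> S \<and> (\<forall>l\<in>L. l \<inter> H \<noteq> {})"

definition gamma_space :: "'p set \<Rightarrow> 'p set set \<Rightarrow> bool" where
  "gamma_space S L \<longleftrightarrow> partial_linear_space S L \<and>
     (\<forall>p\<in>S. subspace S L {q. collinear L p q})"

definition veblenian :: "'p set \<Rightarrow> 'p set set \<Rightarrow> bool" where
  "veblenian S L \<longleftrightarrow>
     (\<forall>p L1 L2 K1 K2. L1 \<in> L \<and> L2 \<in> L \<and> K1 \<in> L \<and> K2 \<in> L \<and>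
        L1 \<noteq> L2 \<and> p \<in> L1 \<and> p \<in> L2 \<and>
        K1 \<noteq> K2 \<and> p \<notin> K1 \<and> p \<notin> K2 \<and>
        K1 \<inter> L1 \<noteq> {} \<and> K1 \<inter> L2 \<noteq> {} \<and> K2 \<inter> L1 \<noteq> {} \<and> K2 \<inter> L2 \<noteq> {}
        \<longrightarrow> K1 \<inter> K2 \<noteq> {})"

definition compl_points :: "'p set \<Rightarrow> 'p set \<Rightarrow> 'p set" where
  "compl_points S G = S - G"

definition compl_lines :: "'p set set \<Rightarrow> 'p set \<Rightarrow> 'p set set" where
  "compl_lines L G = {l - G | l. l \<in> L \<and> \<not> l \<subseteq> G}"

definition subst_pt :: "('i \<Rightarrow> 'p) \<Rightarrow> 'i \<Rightarrow> 'p \<Rightarrow> ('i \<Rightarrow> 'p)" where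
  "subst_pt a i x = a(i := x)"

definition subst_set :: "('i \<Rightarrow> 'p) \<Rightarrow> 'i \<Rightarrow> 'p set \<Rightarrow> ('i \<Rightarrow> 'p) set" where
  "subst_set a i A = subst_pt a i ` A"

definition segre_points :: "'i set \<Rightarrow> ('i \<Rightarrow> 'p set) \<Rightarrow> ('i \<Rightarrow> 'p) set" where
  "segre_points I S = PiE I S"

definition segre_lines :: "'i set \<Rightarrow> ('i \<Rightarrow> 'p set) \<Rightarrow> ('i \<Rightarrow> 'p set set) \<Rightarrow> ('i \<Rightarrow> 'p) set set" where
  "segre_lines I S L = {subst_set a i l | a i l. a \<in> segre_points I S \<and> i \<in> I \<and> l \<in> L i}"

definition trace :: "('i \<Rightarrow> 'p set) \<Rightarrow> ('i \<Rightarrow> 'p) set \<Rightarrow> ('i \<Rightarrow> 'p) \<Rightarrow> 'i \<Rightarrow> 'p set" where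
  "trace S H a i = {x \<in> S i. subst_pt a i x \<in> H}"

end

theory Submission
  imports Defs
begin


lemma four_pt: "infinite A \<or> 4 \<le> card A \<Longrightarrow> \<exists>z\<in>A. z \<noteq> a \<and> z \<noteq> b \<and> z \<noteq> c"
proof (rule ccontr)
  assume h: "infinite A \<or> 4 \<le> card A" and n: "\<not> (\<exists>z\<in>A. z \<noteq> a \<and> z \<noteq> b \<and> z \<noteq> c)"
  hence "A \<subseteq> {a,b,c}" by blast
  moreover have "card {a,b,c} \<le> 3" by (simp add: card_insert_le_m1)
  moreover have "finite {a,b,c}" by simp
  ultimately have fA: "finite A" using finite_subset by blast
  have "card A \<le> card {a,b,c}" using \<open>A \<subseteq> {a,b,c}\<close> card_mono by (metis finite.emptyI finite.insertI)
  hence "card A \<le> 3" using \<open>card {a,b,c} \<le> 3\<close> by linarith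
  thus False using h fA by linarith
qed

locale hsp =
  fixes S :: "'p set" and L :: "'p set set" and T :: "'p set" and X :: "'p set"
  assumes gam: "gamma_space S L" and veb: "veblenian S L"
    and four: "\<forall>l\<in>L. infinite l \<or> 4 \<le> card l"
    and Tsub: "subspace S L T" and Tmeet: "\<forall>l\<in>L. l \<inter> T \<noteq> {}"
    and Xs: "strong_subspace (S - T) (compl_lines L T) X"
begin

lemma pls: "partial_linear_space S L" using gam unfolding gamma_space_def by simp

lemma line_sub: "l \<in> L \<Longrightarrow> l \<subseteq> S"
proof -
  assume "l\<in>L"
  moreover have "\<forall>l\<in>L. l \<subseteq> S \<and> (\<exists>x y. x \<in> l \<and> y \<in> l \<and> x \<noteq> y)"
    using pls unfolding partial_linear_space_def by (elim conjE)
  ultimately show ?thesis by simp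
qed

lemma uniq: "l1\<in>L \<Longrightarrow> l2\<in>L \<Longrightarrow> x\<in>l1 \<Longrightarrow> y\<in>l1 \<Longrightarrow> x\<in>l2 \<Longrightarrow> y\<in>l2 \<Longrightarrow> x\<noteq>y \<Longrightarrow> l1=l2"
proof (rule ccontr)
  assume a: "l1\<in>L" "l2\<in>L" "x\<in>l1" "y\<in>l1" "x\<in>l2" "y\<in>l2" "x\<noteq>y" "l1\<noteq>l2"
  have "\<forall>l1\<in>L. \<forall>l2\<in>L. l1 \<noteq> l2 \<longrightarrow> (\<forall>x y. x \<in> l1 \<inter> l2 \<and> y \<in> l1 \<inter> l2 \<longrightarrow> x = y)"
    using pls unfolding partial_linear_space_def by (elim conjE)
  hence "x = y" using a by simp
  thus False using a by simp
qed

lemma T_sub: "T \<subseteq> S" using Tsub unfolding subspace_def by (elim conjE)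

lemma T_line: "l\<in>L \<Longrightarrow> x\<in>l \<Longrightarrow> y\<in>l \<Longrightarrow> x\<in>T \<Longrightarrow> y\<in>T \<Longrightarrow> x\<noteq>y \<Longrightarrow> l \<subseteq> T"
proof -
  assume a: "l\<in>L" "x\<in>l" "y\<in>l" "x\<in>T" "y\<in>T" "x\<noteq>y"
  have "\<forall>l\<in>L. (\<exists>x y. x \<in> l \<inter> T \<and> y \<in> l \<inter> T \<and> x \<noteq> y) \<longrightarrow> l \<subseteq> T"
    using Tsub unfolding subspace_def by (elim conjE)
  moreover have "\<exists>x y. x \<in> l \<inter> T \<and> y \<in> l \<inter> T \<and> x \<noteq> y" using a by blast
  ultimately show ?thesis using a(1) by simp
qed

lemma T_one: "l\<in>L \<Longrightarrow> p\<in>l \<Longrightarrow> q\<in>l \<Longrightarrow> p\<in>T \<Longrightarrow> q\<in>T \<Longrightarrow> z\<in>l \<Longrightarrow> z\<notin>T \<Longrightarrow> p=q"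
proof (rule ccontr)
  assume a: "l\<in>L" "p\<in>l" "q\<in>l" "p\<in>T" "q\<in>T" "z\<in>l" "z\<notin>T" "p\<noteq>q"
  have "l \<subseteq> T" using T_line[OF a(1,2,3,4,5,8)] .
  thus False using a by blast
qed

lemma X_sub: "X \<subseteq> S - T" using Xs unfolding strong_subspace_def subspace_def by (elim conjE)

lemma Xsp: "\<forall>l\<in>compl_lines L T. (\<exists>x y. x \<in> l \<inter> X \<and> y \<in> l \<inter> X \<and> x \<noteq> y) \<longrightarrow> l \<subseteq> X"
  using Xs unfolding strong_subspace_def subspace_def by (elim conjE)

lemma Xcl: "\<forall>x\<in>X. \<forall>y\<in>X. collinear (compl_lines L T) x y"
  using Xs unfolding strong_subspace_def by (elim conjE)

lemma XnT: "x\<in>X \<Longrightarrow> x\<notin>T" using X_sub by blast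
lemma XS: "x\<in>X \<Longrightarrow> x\<in>S" using X_sub by blast

lemma Xline: "m\<in>L \<Longrightarrow> x\<in>m \<Longrightarrow> y\<in>m \<Longrightarrow> x\<in>X \<Longrightarrow> y\<in>X \<Longrightarrow> x\<noteq>y \<Longrightarrow> z\<in>m \<Longrightarrow> z\<notin>T \<Longrightarrow> z\<in>X"
proof -
  assume a: "m\<in>L" "x\<in>m" "y\<in>m" "x\<in>X" "y\<in>X" "x\<noteq>y" "z\<in>m" "z\<notin>T"
  have "x \<notin> T" using XnT a(4) .
  hence "\<not> m \<subseteq> T" using a(2) by blast
  hence c: "m - T \<in> compl_lines L T" using a(1) unfolding compl_lines_def by blast
  have "\<exists>x y. x \<in> (m-T) \<inter> X \<and> y \<in> (m-T) \<inter> X \<and> x \<noteq> y"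
    using a XnT by blast
  hence "m - T \<subseteq> X" using Xsp c by simp
  thus ?thesis using a(7,8) by blast
qed

lemma Xcol: "x\<in>X \<Longrightarrow> y\<in>X \<Longrightarrow> \<exists>l\<in>L. x\<in>l \<and> y\<in>l"
proof -
  assume a: "x\<in>X" "y\<in>X"
  hence "collinear (compl_lines L T) x y" using Xcl by simp
  then obtain l' where "l' \<in> compl_lines L T" "x\<in>l'" "y\<in>l'" unfolding collinear_def by blast
  then obtain l where "l\<in>L" "l' = l - T" unfolding compl_lines_def by blast
  thus ?thesis using \<open>x\<in>l'\<close> \<open>y\<in>l'\<close> by blast
qed

abbreviation col where "col \<equiv> collinear L"

lemma col_sym: "col p q \<Longrightarrow> col q p" unfolding collinear_def by blast

lemma col_line: "col p q \<Longrightarrow> \<exists>l\<in>L. p\<in>l \<and> q\<in>l" unfolding collinear_def by blast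

lemma perp: "p\<in>S \<Longrightarrow> m\<in>L \<Longrightarrow> x\<in>m \<Longrightarrow> y\<in>m \<Longrightarrow> x\<noteq>y \<Longrightarrow> col p x \<Longrightarrow> col p y \<Longrightarrow> z\<in>m \<Longrightarrow> col p z"
proof -
  assume a: "p\<in>S" "m\<in>L" "x\<in>m" "y\<in>m" "x\<noteq>y" "col p x" "col p y" "z\<in>m"
  have "\<forall>p\<in>S. subspace S L {q. col p q}" using gam unfolding gamma_space_def by (elim conjE)
  hence "subspace S L {q. col p q}" using a(1) by simp
  hence "\<forall>l\<in>L. (\<exists>x y. x \<in> l \<inter> {q. col p q} \<and> y \<in> l \<inter> {q. col p q} \<and> x \<noteq> y) \<longrightarrow> l \<subseteq> {q. col p q}"
    unfolding subspace_def by (elim conjE)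
  moreover have "\<exists>x y. x \<in> m \<inter> {q. col p q} \<and> y \<in> m \<inter> {q. col p q} \<and> x \<noteq> y" using a by blast
  ultimately have "m \<subseteq> {q. col p q}" using a(2) by simp
  thus ?thesis using a(8) by blast
qed

lemma Xcol': "x\<in>X \<Longrightarrow> y\<in>X \<Longrightarrow> col x y"
proof -
  assume "x\<in>X" "y\<in>X"
  then obtain l where "l\<in>L" "x\<in>l" "y\<in>l" using Xcol by blast
  thus ?thesis unfolding collinear_def by blast
qed

lemma inl_col: "l\<in>L \<Longrightarrow> x\<in>l \<Longrightarrow> y\<in>l \<Longrightarrow> col x y" unfolding collinear_def by blast

definition infp :: "'p set" where
  "infp = {p\<in>T. \<exists>l\<in>L. p\<in>l \<and> (\<exists>y1 y2. y1\<in>X \<and> y2\<in>X \<and> y1\<noteq>y2 \<and> y1\<in>l \<and> y2\<in>l)}"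

lemma infpE: "p\<in>infp \<Longrightarrow> \<exists>l y1 y2. l\<in>L \<and> p\<in>l \<and> y1\<in>X \<and> y2\<in>X \<and> y1\<noteq>y2 \<and> y1\<in>l \<and> y2\<in>l \<and> p\<in>T"
  unfolding infp_def by blast

lemma infpI: "p\<in>T \<Longrightarrow> l\<in>L \<Longrightarrow> p\<in>l \<Longrightarrow> y1\<in>X \<Longrightarrow> y2\<in>X \<Longrightarrow> y1\<noteq>y2 \<Longrightarrow> y1\<in>l \<Longrightarrow> y2\<in>l \<Longrightarrow> p\<in>infp"
  unfolding infp_def by blast

lemma colXInf: "x\<in>X \<Longrightarrow> p\<in>infp \<Longrightarrow> col x p"
proof -
  assume a: "x\<in>X" "p\<in>infp"
  then obtain l y1 y2 where l: "l\<in>L" "p\<in>l" "y1\<in>X" "y2\<in>X" "y1\<noteq>y2" "y1\<in>l" "y2\<in>l"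
    using infpE by blast
  have "x\<in>S" using XS a(1) .
  moreover have "col x y1" "col x y2" using Xcol' a(1) l(3,4) by auto
  ultimately show ?thesis using perp[of x l y1 y2 p] l by simp
qed

lemma colInfInf: "p\<in>infp \<Longrightarrow> q\<in>infp \<Longrightarrow> col p q"
proof -
  assume a: "p\<in>infp" "q\<in>infp"
  then obtain l y1 y2 where l: "l\<in>L" "q\<in>l" "y1\<in>X" "y2\<in>X" "y1\<noteq>y2" "y1\<in>l" "y2\<in>l"
    using infpE by blast
  have pS: "p \<in> S" using a(1) T_sub infpE by blast
  have "col p y1" "col p y2" using colXInf col_sym a(1) l(3,4) by auto
  thus ?thesis using perp[of p l y1 y2 q] pS l by simp
qed

lemma K2: "m\<in>L \<Longrightarrow> x\<in>m \<Longrightarrow> y\<in>m \<Longrightarrow> x\<in>X \<Longrightarrow> y\<in>X \<Longrightarrow> x\<noteq>y \<Longrightarrow> m \<subseteq> X \<union> infp"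
proof
  fix z assume a: "m\<in>L" "x\<in>m" "y\<in>m" "x\<in>X" "y\<in>X" "x\<noteq>y" "z\<in>m"
  show "z \<in> X \<union> infp"
  proof (cases "z\<in>T")
    case True thus ?thesis using infpI[of z m x y] a by blast
  next
    case False thus ?thesis using Xline[of m x y z] a by blast
  qed
qed

lemma veb_use:
  assumes "L1\<in>L" "L2\<in>L" "K1\<in>L" "K2\<in>L" "L1\<noteq>L2" "p\<in>L1" "p\<in>L2" "K1\<noteq>K2" "p\<notin>K1" "p\<notin>K2"
    "a1\<in>K1" "a1\<in>L1" "b1\<in>K1" "b1\<in>L2" "a2\<in>K2" "a2\<in>L1" "b2\<in>K2" "b2\<in>L2"
  shows "\<exists>w. w\<in>K1 \<and> w\<in>K2"
proof -
  have "K1 \<inter> L1 \<noteq> {}" "K1 \<inter> L2 \<noteq> {}" "K2 \<inter> L1 \<noteq> {}" "K2 \<inter> L2 \<noteq> {}" using assms by blast+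
  hence "K1 \<inter> K2 \<noteq> {}" using veb[unfolded veblenian_def, rule_format, of L1 L2 K1 K2 p] assms(1-10) by simp
  thus ?thesis by blast
qed

lemma Kb_aux:
  assumes l: "l\<in>L" "p\<in>l" "y1\<in>X" "y2\<in>X" "y1\<noteq>y2" "y1\<in>l" "y2\<in>l" "p\<in>T"
    and m: "m\<in>L" "u\<in>m" "p\<in>m" "u\<in>X" "u\<notin>l"
    and n1: "n1\<in>L" "u\<in>n1" "y1\<in>n1"
    and z: "z\<in>m" "z\<noteq>u" "z\<noteq>p"
  shows "z\<in>X \<or> (\<exists>k w. k\<in>L \<and> z\<in>k \<and> y2\<in>k \<and> w\<in>k \<and> w\<in>n1 \<and> w\<in>T)"
proof -
  have uT: "u\<notin>T" "y1\<notin>T" "y2\<notin>T" using XnT m l by auto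
  have lm: "l \<noteq> m" using m by blast
  have y2S: "y2 \<in> S" using XS l by blast
  have "col y2 u" using Xcol' l m by blast
  moreover have "col y2 p" using inl_col l by blast
  moreover have "u \<noteq> p" using uT l by blast
  ultimately have "col y2 z" using perp[of y2 m u p z] y2S m z by blast
  then obtain k where k: "k\<in>L" "y2\<in>k" "z\<in>k" using col_line by blast
  have zT: "z \<notin> T" using T_one[of m p z u] m l z uT by blast
  have y2n1: "y2 \<notin> n1"
  proof
    assume "y2\<in>n1"
    hence "n1 = l" using uniq[of n1 l y1 y2] n1 l by blast
    thus False using n1 m by blast
  qed
  have pn1: "p \<notin> n1"
  proof
    assume "p\<in>n1"
    hence "n1 = l" using uniq[of n1 l y1 p] n1 l uT by blast
    thus False using n1 m by blast
  qed
  have pk: "p \<notin> k"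
  proof
    assume "p\<in>k"
    hence "k = l" using uniq[of k l y2 p] k l uT by blast
    hence "z \<in> l" using k by blast
    hence "l = m" using uniq[of l m z p] l m z by blast
    thus False using lm by blast
  qed
  have kn1: "k \<noteq> n1" using k y2n1 by blast
  obtain w where w: "w\<in>n1" "w\<in>k"
    using veb_use[of l m n1 k p y1 u y2 z] l m n1 k lm pn1 pk kn1 z by blast
  show ?thesis
  proof (cases "w\<in>T")
    case True thus ?thesis using k w by blast
  next
    case False
    have "u \<noteq> y1" using m l by blast
    hence wX: "w\<in>X" using Xline[of n1 u y1 w] n1 m l w False by blast
    have "w \<noteq> y2" using w y2n1 by blast
    hence "z\<in>X" using Xline[of k w y2 z] k wX l w zT by blast
    thus ?thesis by blast
  qed
qed

lemma Kb:
  assumes "u\<in>X" "p\<in>infp" "m\<in>L" "u\<in>m" "p\<in>m"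
  shows "\<exists>z\<in>X. z\<in>m \<and> z\<noteq>u"
proof -
  obtain l y1 y2 where l: "l\<in>L" "p\<in>l" "y1\<in>X" "y2\<in>X" "y1\<noteq>y2" "y1\<in>l" "y2\<in>l" "p\<in>T"
    using assms(2) infpE by blast
  have uT: "u\<notin>T" using assms XnT by blast
  show ?thesis
  proof (cases "u\<in>l")
    case True
    have "u \<noteq> p" using uT l by blast
    hence "l = m" using uniq[of l m u p] True l assms by blast
    thus ?thesis using l by metis
  next
    case False
    obtain n1 where n1: "n1\<in>L" "u\<in>n1" "y1\<in>n1" using Xcol assms l by blast
    obtain z1 where z1: "z1\<in>m" "z1\<noteq>u" "z1\<noteq>p" using four_pt[of m u p p] four assms by blast
    obtain z2 where z2: "z2\<in>m" "z2\<noteq>u" "z2\<noteq>p" "z2\<noteq>z1" using four_pt[of m u p z1] four assms by blast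
    have A1: "z1\<in>X \<or> (\<exists>k w. k\<in>L \<and> z1\<in>k \<and> y2\<in>k \<and> w\<in>k \<and> w\<in>n1 \<and> w\<in>T)"
      using Kb_aux[OF l assms(3,4,5,1) False n1 z1] .
    have A2: "z2\<in>X \<or> (\<exists>k w. k\<in>L \<and> z2\<in>k \<and> y2\<in>k \<and> w\<in>k \<and> w\<in>n1 \<and> w\<in>T)"
      using Kb_aux[OF l assms(3,4,5,1) False n1 z2(1-3)] .
    show ?thesis
    proof (cases "z1\<in>X \<or> z2\<in>X")
      case True thus ?thesis using z1 z2 by blast
    next
      case False
      then obtain k1 w1 k2 w2 where k: "k1\<in>L" "z1\<in>k1" "y2\<in>k1" "w1\<in>k1" "w1\<in>n1" "w1\<in>T"
         "k2\<in>L" "z2\<in>k2" "y2\<in>k2" "w2\<in>k2" "w2\<in>n1" "w2\<in>T" using A1 A2 by blast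
      have "w1 = w2" using T_one[of n1 w1 w2 u] k n1 uT by blast
      have y2T: "y2 \<notin> T" using l XnT by blast
      have "k1 = k2" using uniq[of k1 k2 y2 w1] k y2T \<open>w1 = w2\<close> by blast
      hence "k1 = m" using uniq[of k1 m z1 z2] k z1 z2 assms by blast
      hence "y2 \<in> m" using k by blast
      have "y2 \<noteq> p" using y2T l by blast
      hence "l = m" using uniq[of l m y2 p] l assms \<open>y2\<in>m\<close> by blast
      hence False using \<open>u\<notin>l\<close> assms by blast
      thus ?thesis by blast
    qed
  qed
qed

lemma Kc:
  assumes uv: "u\<in>infp" "v\<in>infp" "u\<noteq>v" and m: "m\<in>L" "u\<in>m" "v\<in>m" and q: "q\<in>m"
  shows "q\<in>X \<union> infp"
proof (cases "q = u \<or> q = v")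
  case True thus ?thesis using uv by blast
next
  case False
  have uT: "u\<in>T" "v\<in>T" using uv unfolding infp_def by auto
  hence mT: "m \<subseteq> T" using T_line[of m u v] m uv by blast
  obtain x0 where "x0 \<in> X" using uv unfolding infp_def by blast
  note x = this
  have xT: "x0 \<notin> T" using x XnT by blast
  obtain nu where nu: "nu\<in>L" "x0\<in>nu" "u\<in>nu" using col_line colXInf x uv by blast
  obtain nv where nv: "nv\<in>L" "x0\<in>nv" "v\<in>nv" using col_line colXInf x uv by blast
  obtain a1 where a1: "a1\<in>X" "a1\<in>nu" "a1\<noteq>x0" using Kb[of x0 u nu] x uv nu by blast
  obtain b1 where b1: "b1\<in>X" "b1\<in>nv" "b1\<noteq>x0" using Kb[of x0 v nv] x uv nv by blast
  have a1T: "a1\<notin>T" using a1 XnT by blast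
  have a1S: "a1\<in>S" using a1 XS by blast
  have "col a1 q" using perp[of a1 m u v q] a1S m uv q colXInf a1 by blast
  then obtain k where k: "k\<in>L" "a1\<in>k" "q\<in>k" using col_line by blast
  have mnu: "m \<noteq> nu" using nu mT xT by blast
  have uk: "u \<notin> k"
  proof
    assume "u\<in>k"
    hence "k = nu" using uniq[of k nu u a1] k nu a1 a1T uT by blast
    hence "m = nu" using uniq[of m nu q u] k m q nu False by blast
    thus False using mnu by blast
  qed
  have unv: "u \<notin> nv"
  proof
    assume "u\<in>nv"
    hence "nv = m" using uniq[of nv m u v] nv m uv by blast
    thus False using nv mT xT by blast
  qed
  have a1nv: "a1 \<notin> nv"
  proof
    assume "a1\<in>nv"
    hence "nv = nu" using uniq[of nv nu a1 x0] nv nu a1 by blast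
    thus False using unv nu by blast
  qed
  have knv: "k \<noteq> nv" using k a1nv by blast
  obtain w where w: "w\<in>k" "w\<in>nv"
    using veb_use[of m nu k nv u q a1 v x0] m nu k nv mnu uk unv knv q a1 x uv by blast
  have wT: "w \<notin> T"
  proof
    assume "w\<in>T"
    hence "w = v" using T_one[of nv w v x0] nv w uT xT by blast
    hence "k = m" using uniq[of k m v q] k w m q False by blast
    thus False using k mT a1T by blast
  qed
  have wX: "w\<in>X" using Xline[of nv x0 b1 w] nv x b1 w wT by blast
  have "w \<noteq> a1" using w a1nv by blast
  moreover have "q\<in>T" using q mT by blast
  ultimately have "q\<in>infp" unfolding infp_def using k w wX a1 by blast
  thus ?thesis by blast
qed

theorem G3: "strong_subspace S L (X \<union> infp) \<and> (X \<union> infp) - T = X"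
proof -
  have YS: "X \<union> infp \<subseteq> S" using X_sub T_sub unfolding infp_def by blast
  have sub: "\<forall>l\<in>L. (\<exists>x y. x \<in> l \<inter> (X \<union> infp) \<and> y \<in> l \<inter> (X \<union> infp) \<and> x \<noteq> y) \<longrightarrow> l \<subseteq> X \<union> infp"
  proof (intro ballI impI)
    fix m assume m: "m\<in>L" and "\<exists>x y. x \<in> m \<inter> (X \<union> infp) \<and> y \<in> m \<inter> (X \<union> infp) \<and> x \<noteq> y"
    then obtain u v where uv: "u\<in>m" "v\<in>m" "u\<in>X \<union> infp" "v\<in>X\<union>infp" "u\<noteq>v" by blast
    show "m \<subseteq> X \<union> infp"
    proof (cases "u\<in>X")
      case uX: True
      show ?thesis
      proof (cases "v\<in>X")
        case True thus ?thesis using K2[of m u v] m uv uX by blast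
      next
        case False
        then obtain z where "z\<in>X" "z\<in>m" "z\<noteq>u" using Kb[of u v m] uX uv m by blast
        thus ?thesis using K2[of m u z] m uv uX by blast
      qed
    next
      case uX: False
      show ?thesis
      proof (cases "v\<in>X")
        case True
        then obtain z where "z\<in>X" "z\<in>m" "z\<noteq>v" using Kb[of v u m] uX uv m by blast
        thus ?thesis using K2[of m v z] m uv True by blast
      next
        case False
        thus ?thesis using Kc[of u v m] uX uv m by blast
      qed
    qed
  qed
  have colY: "\<forall>x\<in>X \<union> infp. \<forall>y\<in>X \<union> infp. col x y"
    using Xcol' colXInf colInfInf col_sym by blast
  have "(X \<union> infp) - T = X" using X_sub unfolding infp_def by blast
  thus ?thesis using YS sub colY unfolding strong_subspace_def subspace_def by blast
qed

end



lemma ssI: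
  assumes "X \<subseteq> P"
    and "\<And>l x y. l \<in> LL \<Longrightarrow> x\<in>l \<Longrightarrow> y\<in>l \<Longrightarrow> x\<in>X \<Longrightarrow> y\<in>X \<Longrightarrow> x\<noteq>y \<Longrightarrow> l \<subseteq> X"
    and "\<And>x y. x\<in>X \<Longrightarrow> y\<in>X \<Longrightarrow> \<exists>l\<in>LL. x\<in>l \<and> y\<in>l"
  shows "strong_subspace P LL X"
  unfolding strong_subspace_def subspace_def collinear_def
proof (intro conjI ballI impI)
  show "X \<subseteq> P" by fact
next
  fix l assume "l\<in>LL" "\<exists>x y. x \<in> l \<inter> X \<and> y \<in> l \<inter> X \<and> x \<noteq> y"
  then obtain x y where "x \<in> l" "x\<in>X" "y\<in>l" "y\<in>X" "x\<noteq>y" by blast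
  thus "l \<subseteq> X" using assms(2) \<open>l\<in>LL\<close> by blast
next
  fix x y assume "x\<in>X" "y\<in>X" thus "\<exists>l\<in>LL. x\<in>l \<and> y\<in>l" using assms(3) by blast
qed

lemma ssD1: "strong_subspace P LL X \<Longrightarrow> X \<subseteq> P"
  unfolding strong_subspace_def subspace_def by (elim conjE)

lemma ssD2: "strong_subspace P LL X \<Longrightarrow> l \<in> LL \<Longrightarrow> x\<in>l \<Longrightarrow> y\<in>l \<Longrightarrow> x\<in>X \<Longrightarrow> y\<in>X \<Longrightarrow> x\<noteq>y \<Longrightarrow> l \<subseteq> X"
proof -
  assume a: "strong_subspace P LL X" "l \<in> LL" "x\<in>l" "y\<in>l" "x\<in>X" "y\<in>X" "x\<noteq>y"
  have "\<forall>l\<in>LL. (\<exists>x y. x \<in> l \<inter> X \<and> y \<in> l \<inter> X \<and> x \<noteq> y) \<longrightarrow> l \<subseteq> X"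
    using a(1) unfolding strong_subspace_def subspace_def by (elim conjE)
  moreover have "\<exists>x y. x \<in> l \<inter> X \<and> y \<in> l \<inter> X \<and> x \<noteq> y" using a by blast
  ultimately show ?thesis using a(2) by simp
qed

lemma ssD3: "strong_subspace P LL X \<Longrightarrow> x\<in>X \<Longrightarrow> y\<in>X \<Longrightarrow> \<exists>l\<in>LL. x\<in>l \<and> y\<in>l"
proof -
  assume a: "strong_subspace P LL X" "x\<in>X" "y\<in>X"
  have "\<forall>x\<in>X. \<forall>y\<in>X. collinear LL x y" using a(1) unfolding strong_subspace_def by (elim conjE)
  hence "collinear LL x y" using a by simp
  thus ?thesis unfolding collinear_def .
qed

lemma clI: "l\<in>L \<Longrightarrow> z\<in>l \<Longrightarrow> z\<notin>G \<Longrightarrow> l - G \<in> compl_lines L G"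
  unfolding compl_lines_def by blast

lemma clE: "l'\<in>compl_lines L G \<Longrightarrow> \<exists>l. l\<in>L \<and> l' = l - G"
  unfolding compl_lines_def by blast

lemma ss_mem: "y \<in> subst_set b j m \<longleftrightarrow> (\<exists>x\<in>m. y = b(j:=x))"
  unfolding subst_set_def subst_pt_def by auto

lemma ss_memI: "x\<in>m \<Longrightarrow> b(j:=x) \<in> subst_set b j m"
  unfolding subst_set_def subst_pt_def by simp

lemma ss_memE: "y \<in> subst_set b j m \<Longrightarrow> \<exists>x. x\<in>m \<and> y = b(j:=x)"
  unfolding subst_set_def subst_pt_def by auto

lemma segI: "b \<in> PiE I S \<Longrightarrow> j\<in>I \<Longrightarrow> m \<in> L j \<Longrightarrow> subst_set b j m \<in> segre_lines I S L"
  unfolding segre_lines_def segre_points_def by blast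

lemma segE: "l \<in> segre_lines I S L \<Longrightarrow> \<exists>b j m. b\<in>PiE I S \<and> j\<in>I \<and> m\<in>L j \<and> l = subst_set b j m"
  unfolding segre_lines_def segre_points_def by blast

lemma upd_inj: "a(i:=x) = a(i:=y) \<Longrightarrow> x = y" by (metis fun_upd_same)

lemma same_line:
  assumes "a(i:=z1) = b(j:=x1)" "a(i:=z2) = b(j:=x2)" "z1\<noteq>z2"
  shows "j = i \<and> (\<forall>x. b(j:=x) = a(i:=x))"
proof -
  have ji: "j = i"
  proof (rule ccontr)
    assume n: "j \<noteq> i"
    have "x1 = a j" using fun_cong[OF assms(1), of j] n by simp
    moreover have "x2 = a j" using fun_cong[OF assms(2), of j] n by simp
    ultimately have "a(i:=z1) = a(i:=z2)" using assms by simp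
    hence "z1 = z2" by (rule upd_inj)
    thus False using assms by blast
  qed
  have "\<forall>k. k \<noteq> i \<longrightarrow> b k = a k"
    using ji fun_cong[OF assms(1)] by (metis fun_upd_other)
  hence "\<forall>x. b(i:=x) = a(i:=x)" by (auto simp: fun_eq_iff)
  thus ?thesis using ji by simp
qed

lemma upd_PiE: "a \<in> PiE I S \<Longrightarrow> i\<in>I \<Longrightarrow> x \<in> S i \<Longrightarrow> a(i:=x) \<in> PiE I S"
  by (auto simp: PiE_iff extensional_def)

lemma upd_PiE_D: "a(i:=x) \<in> PiE I S \<Longrightarrow> i\<in>I \<Longrightarrow> x \<in> S i"
  by (metis PiE_mem fun_upd_same)

lemma G2:
  assumes Y: "strong_subspace S L Y"
  shows "strong_subspace (S - T) (compl_lines L T) (Y - T)"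
proof (rule ssI)
  show "Y - T \<subseteq> S - T" using ssD1[OF Y] by blast
next
  fix l' x y assume a: "l' \<in> compl_lines L T" "x\<in>l'" "y\<in>l'" "x\<in>Y - T" "y\<in>Y - T" "x\<noteq>y"
  obtain l where l: "l\<in>L" "l' = l - T" using clE[OF a(1)] by blast
  have "x \<in> l" "y\<in>l" "x\<in>Y" "y\<in>Y" using a l by auto
  hence "l \<subseteq> Y" using ssD2[OF Y l(1)] a(6) by simp
  thus "l' \<subseteq> Y - T" using l(2) by blast
next
  fix x y assume a: "x\<in>Y - T" "y\<in>Y - T"
  hence "x\<in>Y" "y\<in>Y" by auto
  then obtain l where l: "l\<in>L" "x\<in>l" "y\<in>l" using ssD3[OF Y] by blast
  have "l - T \<in> compl_lines L T" using clI[OF l(1,2)] a(1) by blast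
  moreover have "x \<in> l - T" "y \<in> l - T" using l a by auto
  ultimately show "\<exists>l'\<in>compl_lines L T. x\<in>l' \<and> y\<in>l'" by (intro bexI[of _ "l - T"]) simp_all
qed

lemma trace_hyp:
  assumes hyp: "hyperplane (PiE I S) (segre_lines I S L) H" and a: "a\<in>PiE I S" and i: "i\<in>I"
    and lines: "\<forall>m\<in>L i. m \<subseteq> S i"
  shows "subspace (S i) (L i) (trace S H a i) \<and> (\<forall>m\<in>L i. m \<inter> trace S H a i \<noteq> {})"
proof -
  have lin: "m\<in>L i \<Longrightarrow> subst_set a i m \<in> segre_lines I S L" for m
    using segI[OF a i] .
  have Hs: "\<forall>l\<in>segre_lines I S L. (\<exists>x y. x \<in> l \<inter> H \<and> y \<in> l \<inter> H \<and> x \<noteq> y) \<longrightarrow> l \<subseteq> H"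
    using hyp unfolding hyperplane_def subspace_def by (elim conjE)
  have Hm: "\<forall>l\<in>segre_lines I S L. l \<inter> H \<noteq> {}"
    using hyp unfolding hyperplane_def by (elim conjE)
  have tr: "x \<in> trace S H a i \<longleftrightarrow> x \<in> S i \<and> a(i:=x) \<in> H" for x
    unfolding trace_def subst_pt_def by simp
  have c1: "trace S H a i \<subseteq> S i" unfolding trace_def by auto
  have c2: "\<forall>m\<in>L i. (\<exists>x y. x \<in> m \<inter> trace S H a i \<and> y \<in> m \<inter> trace S H a i \<and> x \<noteq> y) \<longrightarrow> m \<subseteq> trace S H a i"
  proof (intro ballI impI)
    fix m assume m: "m\<in>L i" and "\<exists>x y. x \<in> m \<inter> trace S H a i \<and> y \<in> m \<inter> trace S H a i \<and> x \<noteq> y"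
    then obtain x y where xy0: "x\<in>m" "y\<in>m" "x\<noteq>y" "x \<in> trace S H a i" "y \<in> trace S H a i"
      by blast
    hence xy: "x\<in>m" "y\<in>m" "x\<noteq>y" "a(i:=x)\<in>H" "a(i:=y)\<in>H" using tr by auto
    have ne: "a(i:=x) \<noteq> a(i:=y)"
    proof
      assume "a(i:=x) = a(i:=y)"
      hence "x = y" by (rule upd_inj)
      thus False using xy(3) by simp
    qed
    have mem: "a(i:=x) \<in> subst_set a i m" "a(i:=y) \<in> subst_set a i m"
      by (rule ss_memI[OF xy(1)], rule ss_memI[OF xy(2)])
    have "\<exists>x y. x \<in> subst_set a i m \<inter> H \<and> y \<in> subst_set a i m \<inter> H \<and> x \<noteq> y"
      using ne mem xy(4,5) by blast
    hence sub: "subst_set a i m \<subseteq> H" using Hs lin[OF m] by simp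
    show "m \<subseteq> trace S H a i"
    proof
      fix z assume z: "z\<in>m"
      have "a(i:=z) \<in> subst_set a i m" using z by (rule ss_memI)
      hence "a(i:=z) \<in> H" using sub by blast
      moreover have "z \<in> S i" using lines m z by blast
      ultimately show "z \<in> trace S H a i" using tr by simp
    qed
  qed
  have c3: "\<forall>m\<in>L i. m \<inter> trace S H a i \<noteq> {}"
  proof
    fix m assume m: "m\<in>L i"
    hence "subst_set a i m \<inter> H \<noteq> {}" using Hm lin by blast
    then obtain w where "w \<in> subst_set a i m" "w\<in>H" by blast
    then obtain x where x: "x\<in>m" "a(i:=x)\<in>H" using ss_memE by metis
    have "x \<in> S i" using lines m x(1) by blast
    hence "x \<in> trace S H a i" using tr x(2) by simp
    thus "m \<inter> trace S H a i \<noteq> {}" using x(1) by blast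
  qed
  have "subspace (S i) (L i) (trace S H a i)" unfolding subspace_def using c1 c2 by (intro conjI)
  thus ?thesis using c3 by (intro conjI)
qed




lemma G1:
  assumes lines: "\<forall>m\<in>L i. m \<subseteq> S i" and ptl: "\<forall>x\<in>S i. \<exists>m\<in>L i. x\<in>m"
    and a: "a \<in> PiE I S" and i: "i\<in>I"
  shows "strong_subspace (PiE I S - H) (compl_lines (segre_lines I S L) H) (subst_set a i Z)
     \<longleftrightarrow> strong_subspace (S i - trace S H a i) (compl_lines (L i) (trace S H a i)) Z"
    (is "?P \<longleftrightarrow> ?Q")
proof -
  define T where "T = trace S H a i"
  define CL where "CL = compl_lines (segre_lines I S L) H"
  have Tm: "x \<in> S i \<Longrightarrow> x \<in> T \<longleftrightarrow> a(i:=x) \<in> H" for x unfolding T_def trace_def subst_pt_def by simp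
  have TmA: "x \<in> S i \<and> x \<notin> T \<Longrightarrow> a(i:=x) \<notin> H" for x
  proof -
    assume h: "x \<in> S i \<and> x \<notin> T"
    have e: "x \<in> T \<longleftrightarrow> a(i:=x) \<in> H" using Tm[OF conjunct1[OF h]] .
    show ?thesis
    proof
      assume "a(i:=x) \<in> H" hence "x \<in> T" using e by (rule iffD2[rotated])
      thus False using h by simp
    qed
  qed
  have TmB: "x \<in> S i \<Longrightarrow> a(i:=x) \<notin> H \<Longrightarrow> x \<notin> T" for x
  proof -
    assume h: "x \<in> S i" "a(i:=x) \<notin> H"
    have e: "x \<in> T \<longleftrightarrow> a(i:=x) \<in> H" using Tm[OF h(1)] .
    show ?thesis
    proof
      assume "x \<in> T" hence "a(i:=x) \<in> H" using e by (rule iffD1[rotated])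
      thus False using h by simp
    qed
  qed
  have PZ: "u \<in> subst_set a i Z \<longleftrightarrow> (\<exists>z. z\<in>Z \<and> u = a(i:=z))" for u
    unfolding subst_set_def subst_pt_def by auto
  have PZI: "z\<in>Z \<Longrightarrow> a(i:=z) \<in> subst_set a i Z" for z by (rule ss_memI)
  have PZI': "a(i:=z) \<in> subst_set a i Z \<Longrightarrow> z\<in>Z" for z
  proof -
    assume "a(i:=z) \<in> subst_set a i Z"
    then obtain z' where "z'\<in>Z" "a(i:=z) = a(i:=z')" using PZ by blast
    moreover have "z = z'" using upd_inj[OF calculation(2)] .
    ultimately show "z\<in>Z" by simp
  qed
  have lin: "m\<in>L i \<Longrightarrow> subst_set a i m \<in> segre_lines I S L" for m using segI[OF a i] .
  have mS: "m\<in>L i \<Longrightarrow> x \<in> m \<Longrightarrow> x\<in>S i" for m x using lines by blast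
  have twopt: "l\<in>segre_lines I S L \<Longrightarrow> a(i:=z1) \<in> l \<Longrightarrow> a(i:=z2) \<in> l \<Longrightarrow> z1\<noteq>z2 \<Longrightarrow>
      \<exists>m. m\<in>L i \<and> l = subst_set a i m" for l z1 z2
  proof -
    assume l: "l\<in>segre_lines I S L" "a(i:=z1) \<in> l" "a(i:=z2) \<in> l" "z1\<noteq>z2"
    obtain b j m where bjm: "b\<in>PiE I S" "j\<in>I" "m\<in>L j" "l = subst_set b j m" using segE[OF l(1)] by blast
    obtain x1 where x1: "x1\<in>m" "a(i:=z1) = b(j:=x1)" using ss_memE l(2) bjm(4) by metis
    obtain x2 where x2: "x2\<in>m" "a(i:=z2) = b(j:=x2)" using ss_memE l(3) bjm(4) by metis
    have sl: "j = i" "\<forall>x. b(j:=x) = a(i:=x)" using same_line[OF x1(2) x2(2) l(4)] by auto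
    have "subst_set b j m = subst_set a i m" unfolding subst_set_def subst_pt_def using sl by simp
    thus ?thesis using bjm sl by auto
  qed
  have insl: "u \<in> subst_set a i m \<Longrightarrow> \<exists>x. x\<in>m \<and> u = a(i:=x)" for u m using ss_memE by metis
  show ?thesis
  proof
    assume P: ?P
    have Psub: "subst_set a i Z \<subseteq> PiE I S - H" using ssD1[OF P] .
    have Zin: "z\<in>Z \<Longrightarrow> z \<in> S i \<and> z \<notin> T" for z
    proof -
      assume z: "z\<in>Z"
      hence "a(i:=z) \<in> PiE I S - H" using subsetD[OF Psub PZI] by simp
      hence "a(i:=z) \<in> PiE I S" "a(i:=z) \<notin> H" by auto
      moreover have "z \<in> S i" using upd_PiE_D[OF calculation(1) i] .
      ultimately show ?thesis using TmB by blast
    qed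
    show ?Q unfolding T_def[symmetric]
    proof (rule ssI)
      show "Z \<subseteq> S i - T" using Zin by blast
    next
      fix m' z1 z2 assume h: "m' \<in> compl_lines (L i) T" "z1\<in>m'" "z2\<in>m'" "z1\<in>Z" "z2\<in>Z" "z1\<noteq>z2"
      obtain m where m: "m\<in>L i" "m' = m - T" using clE[OF h(1)] by blast
      have z1: "z1\<in>m" "z2\<in>m" using h(2,3) m(2) by auto
      have "a(i:=z1) \<notin> H" using TmA[OF Zin[OF h(4)]] .
      hence cl: "subst_set a i m - H \<in> CL" unfolding CL_def using clI[OF lin[OF m(1)] ss_memI[OF z1(1)]] by simp
      have u1: "a(i:=z1) \<in> subst_set a i m - H" using ss_memI[OF z1(1)] TmA[OF Zin[OF h(4)]] by (rule DiffI)
      have u2: "a(i:=z2) \<in> subst_set a i m - H" using ss_memI[OF z1(2)] TmA[OF Zin[OF h(5)]] by (rule DiffI)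
      have ne: "a(i:=z1) \<noteq> a(i:=z2)"
      proof
        assume "a(i:=z1) = a(i:=z2)" hence "z1 = z2" by (rule upd_inj) thus False using h(6) by simp
      qed
      have sub: "subst_set a i m - H \<subseteq> subst_set a i Z"
        using ssD2[OF P cl[unfolded CL_def] u1 u2 PZI[OF h(4)] PZI[OF h(5)] ne] .
      show "m' \<subseteq> Z"
      proof
        fix x assume "x\<in>m'"
        hence x: "x\<in>m" "x\<notin>T" using m(2) by auto
        have "x\<in>S i" using mS[OF m(1) x(1)] .
        hence "a(i:=x) \<notin> H" using TmA x(2) by blast
        hence "a(i:=x) \<in> subst_set a i m - H" using ss_memI[OF x(1)] by simp
        hence "a(i:=x) \<in> subst_set a i Z" using sub by (rule subsetD[rotated])
        thus "x\<in>Z" by (rule PZI')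
      qed
    next
      fix z1 z2 assume z: "z1\<in>Z" "z2\<in>Z"
      have z1: "z1 \<in> S i" "z1 \<notin> T" using Zin[OF z(1)] by auto
      have z2: "z2 \<in> S i" "z2 \<notin> T" using Zin[OF z(2)] by auto
      show "\<exists>l\<in>compl_lines (L i) T. z1\<in>l \<and> z2\<in>l"
      proof (cases "z1 = z2")
        case True
        obtain m where m: "m\<in>L i" "z1\<in>m" using ptl z1(1) by blast
        have "m - T \<in> compl_lines (L i) T" using clI[OF m z1(2)] .
        moreover have "z1 \<in> m - T" using m z1 by simp
        ultimately show ?thesis using True by (intro bexI[of _ "m - T"]) simp_all
      next
        case False
        obtain l where l: "l\<in>CL" "a(i:=z1)\<in>l" "a(i:=z2)\<in>l"
          using ssD3[OF P PZI[OF z(1)] PZI[OF z(2)]] unfolding CL_def by blast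
        obtain l0 where l0: "l0 \<in> segre_lines I S L" "l = l0 - H" using clE l(1) unfolding CL_def by blast
        obtain m where m: "m\<in>L i" "l0 = subst_set a i m" using twopt[OF l0(1) _ _ False] l l0(2) by blast
        obtain x1 where x1: "x1\<in>m" "a(i:=z1) = a(i:=x1)" using insl l(2) l0(2) m(2) by blast
        obtain x2 where x2: "x2\<in>m" "a(i:=z2) = a(i:=x2)" using insl l(3) l0(2) m(2) by blast
        have "z1 = x1" "z2 = x2" by (rule upd_inj[OF x1(2)], rule upd_inj[OF x2(2)])
        hence "z1 \<in> m" "z2 \<in> m" using x1(1) x2(1) by auto
        hence "z1 \<in> m - T" "z2 \<in> m - T" using z1 z2 by auto
        moreover have "m - T \<in> compl_lines (L i) T" using clI[OF m(1) \<open>z1\<in>m\<close> z1(2)] .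
        ultimately show ?thesis by (intro bexI[of _ "m - T"]) simp_all
      qed
    qed
  next
    assume Q0: ?Q
    have Q: "strong_subspace (S i - T) (compl_lines (L i) T) Z" using Q0 unfolding T_def .
    have Zin: "z\<in>Z \<Longrightarrow> z \<in> S i \<and> z \<notin> T" for z using ssD1[OF Q] by blast
    show ?P unfolding CL_def[symmetric]
    proof (rule ssI)
      show "subst_set a i Z \<subseteq> PiE I S - H"
      proof
        fix u assume "u \<in> subst_set a i Z"
        then obtain z where z: "z\<in>Z" "u = a(i:=z)" using PZ by blast
        have "a(i:=z) \<in> PiE I S" using upd_PiE[OF a i] Zin[OF z(1)] by blast
        moreover have "a(i:=z) \<notin> H" using TmA[OF Zin[OF z(1)]] .
        ultimately show "u \<in> PiE I S - H" using z(2) by simp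
      qed
    next
      fix l' u v assume h: "l' \<in> CL" "u\<in>l'" "v\<in>l'" "u \<in> subst_set a i Z" "v \<in> subst_set a i Z" "u\<noteq>v"
      obtain l where l: "l \<in> segre_lines I S L" "l' = l - H" using clE h(1) unfolding CL_def by blast
      obtain z1 where z1: "z1\<in>Z" "u = a(i:=z1)" using PZ h(4) by blast
      obtain z2 where z2: "z2\<in>Z" "v = a(i:=z2)" using PZ h(5) by blast
      have ne: "z1 \<noteq> z2" using h(6) z1(2) z2(2) by auto
      have "a(i:=z1) \<in> l" "a(i:=z2) \<in> l" using h(2,3) l(2) z1(2) z2(2) by auto
      then obtain m where m: "m\<in>L i" "l = subst_set a i m" using twopt[OF l(1) _ _ ne] by blast
      obtain x1 where x1: "x1\<in>m" "a(i:=z1) = a(i:=x1)" using insl \<open>a(i:=z1) \<in> l\<close> m(2) by blast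
      obtain x2 where x2: "x2\<in>m" "a(i:=z2) = a(i:=x2)" using insl \<open>a(i:=z2) \<in> l\<close> m(2) by blast
      have "z1 = x1" "z2 = x2" by (rule upd_inj[OF x1(2)], rule upd_inj[OF x2(2)])
      hence zm: "z1 \<in> m" "z2 \<in> m" using x1(1) x2(1) by auto
      have mT: "m - T \<in> compl_lines (L i) T" using clI[OF m(1) zm(1)] Zin[OF z1(1)] by simp
      have mZ: "m - T \<subseteq> Z" using ssD2[OF Q mT _ _ z1(1) z2(1) ne] zm Zin[OF z1(1)] Zin[OF z2(1)] by simp
      show "l' \<subseteq> subst_set a i Z"
      proof
        fix w assume "w\<in>l'"
        hence w: "w \<in> subst_set a i m" "w \<notin> H" using l(2) m(2) by auto
        obtain x where x: "x\<in>m" "w = a(i:=x)" using insl[OF w(1)] by blast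
        have "x \<in> S i" using mS[OF m(1) x(1)] .
        hence "x \<notin> T" using TmB[OF _ w(2)[unfolded x(2)]] by blast
        hence "x \<in> Z" using mZ x(1) by blast
        thus "w \<in> subst_set a i Z" using PZI x(2) by simp
      qed
    next
      fix u v assume h: "u \<in> subst_set a i Z" "v \<in> subst_set a i Z"
      obtain z1 where z1: "z1\<in>Z" "u = a(i:=z1)" using PZ h(1) by blast
      obtain z2 where z2: "z2\<in>Z" "v = a(i:=z2)" using PZ h(2) by blast
      obtain m' where m': "m' \<in> compl_lines (L i) T" "z1\<in>m'" "z2\<in>m'" using ssD3[OF Q z1(1) z2(1)] by blast
      obtain m where m: "m\<in>L i" "m' = m - T" using clE[OF m'(1)] by blast
      have zm: "z1\<in>m" "z2\<in>m" using m'(2,3) m(2) by auto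
      have "a(i:=z1) \<notin> H" using TmA[OF Zin[OF z1(1)]] .
      hence cl: "subst_set a i m - H \<in> CL" unfolding CL_def using clI[OF lin[OF m(1)] ss_memI[OF zm(1)]] by simp
      have "a(i:=z1) \<in> subst_set a i m - H" using ss_memI[OF zm(1)] TmA[OF Zin[OF z1(1)]] by (rule DiffI)
      moreover have "a(i:=z2) \<in> subst_set a i m - H" using ss_memI[OF zm(2)] TmA[OF Zin[OF z2(1)]] by (rule DiffI)
      ultimately show "\<exists>l\<in>CL. u\<in>l \<and> v\<in>l" using cl z1(2) z2(2) by (intro bexI[of _ "subst_set a i m - H"]) simp_all
    qed
  qed
qed




lemma col_diff:
  assumes "\<exists>l\<in>compl_lines (segre_lines I S L) H. x\<in>l \<and> y\<in>l"
  shows "\<exists>j\<in>I. y = x(j := y j)"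
proof -
  obtain l' where l': "l'\<in>compl_lines (segre_lines I S L) H" "x\<in>l'" "y\<in>l'" using assms by blast
  obtain l where l: "l\<in>segre_lines I S L" "l' = l - H" using clE[OF l'(1)] by blast
  obtain b j m where bjm: "b\<in>PiE I S" "j\<in>I" "m\<in>L j" "l = subst_set b j m" using segE[OF l(1)] by blast
  have "x \<in> subst_set b j m" "y \<in> subst_set b j m" using l' l bjm(4) by auto
  then obtain x1 x2 where "x = b(j:=x1)" "y = b(j:=x2)" using ss_memE[of x b j m] ss_memE[of y b j m] by blast
  hence "y = x(j := y j)" by simp
  thus ?thesis using bjm(2) by blast
qed

lemma upd_ne: "b = a(i:=b i) \<Longrightarrow> b \<noteq> a \<Longrightarrow> b i \<noteq> a i"
proof
  assume h: "b = a(i:=b i)" "b \<noteq> a" "b i = a i"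
  hence "b = a(i := a i)" by simp
  hence "b = a" by simp
  thus False using h(2) by simp
qed

lemma struct:
  assumes X: "strong_subspace (PiE I S - H) (compl_lines (segre_lines I S L) H) X"
    and ne: "PiE I S \<noteq> {}" and I: "I \<noteq> {}"
  shows "\<exists>a\<in>PiE I S. \<exists>i\<in>I. X = subst_set a i ((\<lambda>x. x i) ` X)"
proof -
  have Xsub: "X \<subseteq> PiE I S" using ssD1[OF X] by blast
  have cd: "x\<in>X \<Longrightarrow> y\<in>X \<Longrightarrow> \<exists>j\<in>I. y = x(j := y j)" for x y
    by (rule col_diff[OF ssD3[OF X]])
  have ssE: "subst_set a i A = (\<lambda>x. a(i:=x)) ` A" for a i A unfolding subst_set_def subst_pt_def by auto
  show ?thesis
  proof (cases "\<exists>a b. a\<in>X \<and> b\<in>X \<and> a\<noteq>b")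
    case False
    show ?thesis
    proof (cases "X = {}")
      case True
      obtain a where "a \<in> PiE I S" using ne by blast
      moreover obtain i where "i\<in>I" using I by blast
      moreover have "X = subst_set a i ((\<lambda>x. x i) ` X)" using True unfolding ssE by simp
      ultimately show ?thesis by blast
    next
      case F2: False
      then obtain a where a: "a\<in>X" by blast
      hence Xa: "X = {a}" using False by blast
      obtain i where "i\<in>I" using I by blast
      moreover have "{a} = subst_set a i ((\<lambda>x. x i) ` {a})" unfolding ssE by simp
      moreover have "a \<in> PiE I S" using Xsub a by blast
      ultimately show ?thesis using Xa by blast
    qed
  next
    case True
    then obtain a b where ab: "a\<in>X" "b\<in>X" "a\<noteq>b" by blast
    obtain i where i: "i\<in>I" "b = a(i:= b i)" using cd[OF ab(1,2)] by blast
    have bi: "b i \<noteq> a i" using upd_ne[OF i(2)] ab(3) by simp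
    have key: "c\<in>X \<Longrightarrow> c = a(i := c i)" for c
    proof -
      assume c: "c\<in>X"
      show ?thesis
      proof (cases "c = a")
        case True thus ?thesis by simp
      next
        case False
        obtain j where j: "j\<in>I" "c = a(j:=c j)" using cd[OF ab(1) c] by blast
        have cj: "c j \<noteq> a j" using upd_ne[OF j(2)] False by simp
        show ?thesis
        proof (cases "j = i")
          case True thus ?thesis using j by simp
        next
          case ji: False
          have ci: "c i = a i" using fun_cong[OF j(2), of i] ji by simp
          obtain k where k: "k\<in>I" "c = b(k := c k)" using cd[OF ab(2) c] by blast
          have "k = i"
          proof (rule ccontr)
            assume "k \<noteq> i"
            hence "c i = b i" using fun_cong[OF k(2), of i] by simp
            thus False using ci bi by simp
          qed
          hence "c j = b j" using fun_cong[OF k(2), of j] ji by simp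
          also have "b j = a j" using fun_cong[OF i(2), of j] ji by simp
          finally show ?thesis using cj by simp
        qed
      qed
    qed
    have "X = (\<lambda>x. a(i:=x)) ` ((\<lambda>x. x i) ` X)"
    proof
      show "X \<subseteq> (\<lambda>x. a(i:=x)) ` ((\<lambda>x. x i) ` X)"
      proof
        fix c assume c: "c\<in>X"
        have "c = (\<lambda>x. a(i:=x)) (c i)" using key[OF c] by simp
        moreover have "c i \<in> (\<lambda>x. x i) ` X" using c by (rule imageI)
        ultimately show "c \<in> (\<lambda>x. a(i:=x)) ` ((\<lambda>x. x i) ` X)" by (rule image_eqI)
      qed
    next
      show "(\<lambda>x. a(i:=x)) ` ((\<lambda>x. x i) ` X) \<subseteq> X"
      proof
        fix d assume "d \<in> (\<lambda>x. a(i:=x)) ` ((\<lambda>x. x i) ` X)"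
        then obtain c where c: "c\<in>X" "d = a(i := c i)" by blast
        thus "d\<in>X" using key[OF c(1)] by simp
      qed
    qed
    hence "X = subst_set a i ((\<lambda>x. x i) ` X)" unfolding ssE by simp
    moreover have "a \<in> PiE I S" using Xsub ab(1) by blast
    ultimately show ?thesis using i(1) by blast
  qed
qed




lemma ident: "Y \<subseteq> S i \<Longrightarrow> subst_set a i Y - H = subst_set a i (Y - trace S H a i)"
  unfolding subst_set_def subst_pt_def trace_def by auto


theorem proposition3p11:
  fixes I :: "'i set" and S :: "'i \<Rightarrow> 'p set" and L :: "'i \<Rightarrow> 'p set set"
    and H :: "('i \<Rightarrow> 'p) set" and X :: "('i \<Rightarrow> 'p) set"
  assumes "countable I"
    and "\<exists>i\<in>I. \<exists>j\<in>I. i \<noteq> j"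
    and "\<forall>i\<in>I. gamma_space (S i) (L i) \<and> veblenian (S i) (L i)"
    and "\<forall>i\<in>I. \<forall>l\<in>L i. infinite l \<or> 4 \<le> card l"
    and "hyperplane (segre_points I S) (segre_lines I S L) H"
  shows "(strong_subspace (compl_points (segre_points I S) H)
             (compl_lines (segre_lines I S L) H) X
          \<longleftrightarrow> (\<exists>a\<in>segre_points I S. \<exists>i\<in>I. \<exists>Y. strong_subspace (S i) (L i) Y \<and>
                 X = subst_set a i Y - H))
       \<and> (strong_subspace (compl_points (segre_points I S) H)
             (compl_lines (segre_lines I S L) H) X
          \<longleftrightarrow> (\<exists>a\<in>segre_points I S. \<exists>i\<in>I. \<exists>Xi.
                 strong_subspace (compl_points (S i) (trace S H a i))
                   (compl_lines (L i) (trace S H a i)) Xi \<and>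
                 X = subst_set a i Xi))"
proof -
  have hyp: "hyperplane (PiE I S) (segre_lines I S L) H" using assms(5) unfolding segre_points_def .
  have gi: "i\<in>I \<Longrightarrow> gamma_space (S i) (L i)" for i using assms(3) by blast
  have pls: "i\<in>I \<Longrightarrow> partial_linear_space (S i) (L i)" for i using gi unfolding gamma_space_def by blast
  have lines: "i\<in>I \<Longrightarrow> \<forall>m\<in>L i. m \<subseteq> S i" for i
    using pls unfolding partial_linear_space_def by blast
  have ptl: "i\<in>I \<Longrightarrow> \<forall>x\<in>S i. \<exists>m\<in>L i. x\<in>m" for i
    using pls unfolding partial_linear_space_def by blast
  have "H \<subseteq> PiE I S" "H \<noteq> PiE I S" using hyp unfolding hyperplane_def subspace_def by auto
  hence ne: "PiE I S \<noteq> {}" by blast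
  have Ine: "I \<noteq> {}" using assms(2) by blast
  have cp: "compl_points (segre_points I S) H = PiE I S - H" unfolding compl_points_def segre_points_def ..
  have cpi: "compl_points (S i) G = S i - G" for i G unfolding compl_points_def ..
  let ?P = "strong_subspace (PiE I S - H) (compl_lines (segre_lines I S L) H) X"
  let ?C = "\<exists>a\<in>PiE I S. \<exists>i\<in>I. \<exists>Xi.
                 strong_subspace (S i - trace S H a i) (compl_lines (L i) (trace S H a i)) Xi \<and>
                 X = subst_set a i Xi"
  let ?B = "\<exists>a\<in>PiE I S. \<exists>i\<in>I. \<exists>Y. strong_subspace (S i) (L i) Y \<and> X = subst_set a i Y - H"
  have PC: "?P \<longleftrightarrow> ?C"
  proof
    assume P: ?P
    obtain a i where ai: "a\<in>PiE I S" "i\<in>I" "X = subst_set a i ((\<lambda>x. x i) ` X)"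
      using struct[OF P ne Ine] by blast
    have "strong_subspace (PiE I S - H) (compl_lines (segre_lines I S L) H) (subst_set a i ((\<lambda>x. x i) ` X))"
      using P ai(3) by simp
    hence "strong_subspace (S i - trace S H a i) (compl_lines (L i) (trace S H a i)) ((\<lambda>x. x i) ` X)"
      using G1[where L=L and S=S and I=I and i=i and a=a, OF lines[OF ai(2)] ptl[OF ai(2)] ai(1,2)] by blast
    thus ?C using ai by blast
  next
    assume ?C
    then obtain a i Xi where ai: "a\<in>PiE I S" "i\<in>I"
      "strong_subspace (S i - trace S H a i) (compl_lines (L i) (trace S H a i)) Xi" "X = subst_set a i Xi"
      by blast
    have "strong_subspace (PiE I S - H) (compl_lines (segre_lines I S L) H) (subst_set a i Xi)"
      using G1[where L=L and S=S and I=I and i=i and a=a, OF lines[OF ai(2)] ptl[OF ai(2)] ai(1,2)] ai(3) by blast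
    thus ?P using ai(4) by simp
  qed
  have PB: "?P \<longleftrightarrow> ?B"
  proof
    assume ?P
    then obtain a i Xi where ai: "a\<in>PiE I S" "i\<in>I"
      "strong_subspace (S i - trace S H a i) (compl_lines (L i) (trace S H a i)) Xi" "X = subst_set a i Xi"
      using PC by blast
    have tr: "subspace (S i) (L i) (trace S H a i) \<and> (\<forall>m\<in>L i. m \<inter> trace S H a i \<noteq> {})"
      using trace_hyp[OF hyp ai(1,2) lines[OF ai(2)]] .
    have loc: "hsp (S i) (L i) (trace S H a i) Xi"
      unfolding hsp_def using assms(3,4) ai(2,3) tr by blast
    interpret h: hsp "S i" "L i" "trace S H a i" Xi by (rule loc)
    have g: "strong_subspace (S i) (L i) (Xi \<union> h.infp)" "(Xi \<union> h.infp) - trace S H a i = Xi"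
      using h.G3 by auto
    have "Xi \<union> h.infp \<subseteq> S i" using ssD1[OF g(1)] .
    hence "subst_set a i (Xi \<union> h.infp) - H = subst_set a i ((Xi \<union> h.infp) - trace S H a i)" by (rule ident)
    hence "subst_set a i (Xi \<union> h.infp) - H = X" using g(2) ai(4) by simp
    thus ?B using g(1) ai(1,2) by blast
  next
    assume ?B
    then obtain a i Y where ai: "a\<in>PiE I S" "i\<in>I" "strong_subspace (S i) (L i) Y" "X = subst_set a i Y - H"
      by blast
    have "Y \<subseteq> S i" using ssD1[OF ai(3)] .
    hence X: "X = subst_set a i (Y - trace S H a i)" using ident ai(4) by simp
    have "strong_subspace (S i - trace S H a i) (compl_lines (L i) (trace S H a i)) (Y - trace S H a i)"
      using G2[OF ai(3)] .
    hence "strong_subspace (PiE I S - H) (compl_lines (segre_lines I S L) H) (subst_set a i (Y - trace S H a i))"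
      using G1[where L=L and S=S and I=I and i=i and a=a, OF lines[OF ai(2)] ptl[OF ai(2)] ai(1,2)] by blast
    thus ?P using X by simp
  qed
  show ?thesis unfolding cp cpi segre_points_def[symmetric] using PB PC unfolding segre_points_def by blast
qed


end
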